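(* Assume $\mathcal S\subseteq\mathcal D$. Let $F\in\mathbb R^{d\times s}$, $H=BFC$, $\bar F=F\bar C$, $\bar H=\bar B\bar F$, and consider the closed-loop systems $e[k+1]=(I_{2n}-H)e[k]$ (closed loop of $\Sigma^1$ under $u=-Fy$) and $\bar e[k+1]=(I_s-\bar H)\bar e[k]$ (closed loop of $\Sigma^2$ under $u=-\bar F\bar e$). Suppose every eigenvalue $\lambda$ of $\bar H$ satisfies $|\lambda-1|<1$. Then: (i) every trajectory of $\bar e[k+1]=(I_s-\bar H)\bar e[k]$ converges to $0$ exponentially; (ii) the system $e[k+1]=(I_{2n}-H)e[k]$ is stable in the sense of Lyapunov (all trajectories remain bounded; equivalently all eigenvalues of $I_{2n}-H$ have modulus at most $1$ and those of modulus $1$ are semisimple); (iii) for every trajectory of $e[k+1]=(I_{2n}-H)e[k]$ and every $p\in\mathcal S$, the component $e_p[k]$ converges to $0$ exponentially.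
   Context: Standing setup. Let $n\ge 1$ and consider a radial distribution network modeled as a tree with root node $0$ (the substation), non-root nodes $\mathcal N=\{1,\dots,n\}$, and edge set $\mathcal L$; each edge $(i,j)\in\mathcal L$ has resistance $r_{ij}\in\mathbb R$ and reactance $x_{ij}\in\mathbb R$. For a node $i$, $\mathcal L_i$ denotes the set of edges on the unique path from node $0$ to node $i$. Define $R^0,X^0\in\mathbb R^{n\times n}$ by $R^0_{ij}=2\sum_{(w,t)\in\mathcal L_i\cap\mathcal L_j} r_{wt}$ and $X^0_{ij}=2\sum_{(w,t)\in\mathcal L_i\cap\mathcal L_j} x_{wt}$. Let $\mathcal D_1\subseteq\mathcal N$ (nodes with a DER) and $\mathcal S_1\subseteq\mathcal N$ (nodes with a sensor) be nonempty, listed in increasing order; let $\mathcal D_2=\{i+n: i\in\mathcal D_1\}$, $\mathcal S_2=\{i+n:i\in\mathcal S_1\}$, $\mathcal D=\mathcal D_1\cup\mathcal D_2$, $\mathcal S=\mathcal S_1\cup\mathcal S_2$ (subsets of $\{1,\dots,2n\}$, listed in increasing order), $d=|\mathcal D|$, $s=|\mathcal S|$, $\overline{\mathcal D}=\{1,\dots,2n\}\setminus\mathcal D$, $\overline{\mathcal S}=\{1,\dots,2n\}\setminus\mathcal S$. For an increasingly ordered set $\Omega=\{i_1,\dots,i_g\}\subseteq\{1,\dots,c\}$, let $\Gamma_c(\Omega)=[\mathfrak e_{i_1}\ \cdots\ \mathfrak e_{i_g}]\in\mathbb R^{c\times g}$, where $\mathfrak e_\omega$ is the $\omega$-th standard basis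 vector of $\mathbb R^c$. Set $T^d=\Gamma_n(\mathcal D_1)$, $R=R^0T^d$, $X=X^0T^d\in\mathbb R^{n\times d/2}$, $T^s=\Gamma_{2n}(\mathcal S)^\top\in\mathbb R^{s\times 2n}$, and $A=I_{2n}$, $B=\begin{bmatrix}X & R\\ -\tfrac12 R & \tfrac12 X\end{bmatrix}\in\mathbb R^{2n\times d}$, $C=T^s$. The system $\Sigma^1$ is $e[k+1]=Ae[k]+Bu[k]$, $y[k]=Ce[k]$ with state $e[k]\in\mathbb R^{2n}$, input $u[k]\in\mathbb R^d$, output $y[k]\in\mathbb R^s$. Define the permutation matrix $T=[\Gamma_{2n}(\mathcal S\cap\mathcal D),\ \Gamma_{2n}(\mathcal S\cap\overline{\mathcal D}),\ \Gamma_{2n}(\overline{\mathcal S}\cap\mathcal D),\ \Gamma_{2n}(\overline{\mathcal S}\cap\overline{\mathcal D})]\in\mathbb R^{2n\times 2n}$ (each intersection listed in increasing order) and $G=\Gamma_{2n}(\{1,\dots,s\})\in\mathbb R^{2n\times s}$. The reduced system $\Sigma^2$ has $\bar A=I_s$, $\bar B=G^\top T^{-1}B\in\mathbb R^{s\times d}$, $\bar C=CTG\in\mathbb R^{s\times s}$, and reduced state $\bar e=G^\top T^{-1}e\in\mathbb R^s$. *)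

theory Defs
  imports "Jordan_Normal_Form.Char_Poly" "Jordan_Normal_Form.Gauss_Jordan_Elimination"
begin

(* The edges are (par i, i), i = 1..n; r i, x i are the resistance / reactance of the
   edge (par i, i).
   JNF matrices/vectors are 0-indexed: paper index i (1-based) corresponds to JNF index i-1. *)

definition is_rooted_tree :: "nat \<Rightarrow> (nat \<Rightarrow> nat) \<Rightarrow> bool" where
  "is_rooted_tree n par \<longleftrightarrow> par 0 = 0 \<and> (\<forall>i\<in>{1..n}. par i \<le> n) \<and>
     (\<forall>i\<in>{1..n}. \<exists>k. (par ^^ k) i = 0)"

(* non-root nodes on the path from 0 to i; the edges of L_i are (par w, w) for w in this set *)
definition path_nodes :: "(nat \<Rightarrow> nat) \<Rightarrow> nat \<Rightarrow> nat set" where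
  "path_nodes par i = {(par ^^ k) i | k. True} - {0}"

definition path_mat :: "nat \<Rightarrow> (nat \<Rightarrow> nat) \<Rightarrow> (nat \<Rightarrow> real) \<Rightarrow> real mat" where
  "path_mat n par r = mat n n (\<lambda>(i, j). 2 * (\<Sum>w \<in> path_nodes par (i+1) \<inter> path_nodes par (j+1). r w))"

(* Gamma for a list of (1-based) indices: column b is the standard basis vector e_{xs!b} *)
definition GammaL :: "nat \<Rightarrow> nat list \<Rightarrow> real mat" where
  "GammaL c xs = mat c (length xs) (\<lambda>(a, b). if a + 1 = xs ! b then 1 else 0)"

definition Gamma :: "nat \<Rightarrow> nat set \<Rightarrow> real mat" where
  "Gamma c \<Omega> = GammaL c (sorted_list_of_set \<Omega>)"

definition Dset :: "nat \<Rightarrow> nat set \<Rightarrow> nat set" where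
  "Dset n D1 = D1 \<union> (\<lambda>i. i + n) ` D1"

definition Bmat :: "nat \<Rightarrow> (nat \<Rightarrow> nat) \<Rightarrow> (nat \<Rightarrow> real) \<Rightarrow> (nat \<Rightarrow> real) \<Rightarrow> nat set \<Rightarrow> real mat" where
  "Bmat n par r x D1 =
     (let Td = Gamma n D1; R = path_mat n par r * Td; X = path_mat n par x * Td
      in four_block_mat X R ((-1/2) \<cdot>\<^sub>m R) ((1/2) \<cdot>\<^sub>m X))"

definition Cmat :: "nat \<Rightarrow> nat set \<Rightarrow> real mat" where
  "Cmat n S1 = transpose_mat (Gamma (2*n) (Dset n S1))"

definition Tmat :: "nat \<Rightarrow> nat set \<Rightarrow> nat set \<Rightarrow> real mat" where
  "Tmat n D1 S1 =
     (let D = Dset n D1; S = Dset n S1; U = {1..2*n}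
      in GammaL (2*n) (sorted_list_of_set (S \<inter> D) @ sorted_list_of_set (S \<inter> (U - D)) @
                       sorted_list_of_set ((U - S) \<inter> D) @ sorted_list_of_set ((U - S) \<inter> (U - D))))"

definition Gmat :: "nat \<Rightarrow> nat \<Rightarrow> real mat" where
  "Gmat n s = Gamma (2*n) {1..s}"

definition Bbar :: "nat \<Rightarrow> (nat \<Rightarrow> nat) \<Rightarrow> (nat \<Rightarrow> real) \<Rightarrow> (nat \<Rightarrow> real) \<Rightarrow> nat set \<Rightarrow> nat set \<Rightarrow> real mat" where
  "Bbar n par r x D1 S1 =
     transpose_mat (Gmat n (card (Dset n S1))) * the (mat_inverse (Tmat n D1 S1)) * Bmat n par r x D1"

definition Cbar :: "nat \<Rightarrow> nat set \<Rightarrow> nat set \<Rightarrow> real mat" where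
  "Cbar n D1 S1 = Cmat n S1 * Tmat n D1 S1 * Gmat n (card (Dset n S1))"

definition is_traj :: "nat \<Rightarrow> real mat \<Rightarrow> (nat \<Rightarrow> real vec) \<Rightarrow> bool" where
  "is_traj m M e \<longleftrightarrow> (\<forall>k. e k \<in> carrier_vec m \<and> e (Suc k) = M *\<^sub>v e k)"

definition exp_conv :: "(nat \<Rightarrow> real) \<Rightarrow> bool" where
  "exp_conv f \<longleftrightarrow> (\<exists>c \<rho>. 0 \<le> \<rho> \<and> \<rho> < 1 \<and> (\<forall>k. \<bar>f k\<bar> \<le> c * \<rho> ^ k))"

end

theory Submission
  imports Defs "Jordan_Normal_Form.Spectral_Radius"
begin


lemma smult_pow_mat: assumes A: "(A :: 'a :: comm_ring_1 mat) \<in> carrier_mat m m"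
  shows "(a \<cdot>\<^sub>m A) ^\<^sub>m k = a^k \<cdot>\<^sub>m (A ^\<^sub>m k)"
proof (induct k)
  case 0 then show ?case using A by (intro eq_matI) auto
next
  case (Suc k)
  have "(a \<cdot>\<^sub>m A) ^\<^sub>m Suc k = (a^k \<cdot>\<^sub>m (A ^\<^sub>m k)) * (a \<cdot>\<^sub>m A)" using Suc by simp
  also have "\<dots> = a^k \<cdot>\<^sub>m (a \<cdot>\<^sub>m (A ^\<^sub>m k * A))"
    using A by (simp add: mult_smult_assoc_mat[OF pow_carrier_mat[OF A] smult_carrier_mat[OF A]]
        mult_smult_distrib[OF pow_carrier_mat[OF A] A])
  also have "\<dots> = a^Suc k \<cdot>\<^sub>m (A ^\<^sub>m Suc k)" by (intro eq_matI) (auto simp: mult.commute)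
  finally show ?case .
qed

lemma pow_decay_complex:
  assumes A: "(A :: complex mat) \<in> carrier_mat m m"
    and ev: "\<And>mu. eigenvalue A mu \<Longrightarrow> norm mu < 1"
  shows "\<exists>c \<rho>. 0 \<le> \<rho> \<and> \<rho> < 1 \<and> (\<forall>k i j. i < m \<longrightarrow> j < m \<longrightarrow> norm ((A ^\<^sub>m k) $$ (i,j)) \<le> c * \<rho>^k)"
proof (cases "m = 0")
  case True then show ?thesis by (intro exI[of _ 0] exI[of _ 0]) auto
next
  case False
  hence m: "m > 0" by auto
  define sr where "sr = spectral_radius A"
  from spectral_radius_mem_max(1)[OF A m] obtain mu0 where mu0: "mu0 \<in> spectrum A" "sr = norm mu0"
    unfolding sr_def by auto
  from ev[of mu0] mu0 have sr1: "sr < 1" unfolding spectrum_def by auto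
  have sr0: "sr \<ge> 0" using mu0 by auto
  define \<rho> where "\<rho> = (1 + sr) / 2"
  have rho: "0 < \<rho>" "\<rho> < 1" "sr < \<rho>" using sr0 sr1 unfolding \<rho>_def by auto
  define A' where "A' = complex_of_real (1/\<rho>) \<cdot>\<^sub>m A"
  have A': "A' \<in> carrier_mat m m" unfolding A'_def using A by auto
  have "spectral_radius A' < 1"
  proof -
    from spectral_radius_mem_max(1)[OF A' m] obtain mu where mu: "mu \<in> spectrum A'"
      "spectral_radius A' = norm mu" by auto
    from mu(1) obtain v where v: "eigenvector A' v mu" unfolding spectrum_def eigenvalue_def by auto
    hence vc: "v \<in> carrier_vec m" "v \<noteq> 0\<^sub>v m" and Av: "A' *\<^sub>v v = mu \<cdot>\<^sub>v v"
      using A' unfolding eigenvector_def by auto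
    have "A *\<^sub>v v = complex_of_real \<rho> \<cdot>\<^sub>v (A' *\<^sub>v v)"
      unfolding A'_def using A vc rho by (intro eq_vecI) (auto simp: scalar_prod_def sum_distrib_left)
    also have "\<dots> = (complex_of_real \<rho> * mu) \<cdot>\<^sub>v v" unfolding Av by (simp add: smult_smult_assoc)
    finally have "eigenvector A v (complex_of_real \<rho> * mu)" using vc A unfolding eigenvector_def by auto
    hence "eigenvalue A (complex_of_real \<rho> * mu)" unfolding eigenvalue_def by auto
    hence "norm (complex_of_real \<rho> * mu) \<le> sr" unfolding sr_def
      by (intro spectral_radius_mem_max(2)[OF A m]) (auto simp: spectrum_def)
    hence "\<rho> * norm mu \<le> sr" using rho by (simp add: norm_mult)
    hence "\<rho> * norm mu < \<rho> * 1" using rho(3) by linarith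
    hence "norm mu < 1" by (simp only: mult_less_cancel_left_pos[OF rho(1)])
    thus ?thesis using mu by auto
  qed
  from spectral_radius_jnf_norm_bound_less_1_upper_triangular[OF A' this]
  obtain c where c: "\<And>k. norm_bound (A' ^\<^sub>m k) c" by auto
  have "norm ((A ^\<^sub>m k) $$ (i,j)) \<le> c * \<rho>^k" if ij: "i < m" "j < m" for k i j
  proof -
    have "A' ^\<^sub>m k = complex_of_real (1/\<rho>)^k \<cdot>\<^sub>m (A ^\<^sub>m k)" unfolding A'_def by (rule smult_pow_mat[OF A])
    hence "(A' ^\<^sub>m k) $$ (i,j) = complex_of_real ((1/\<rho>)^k) * (A ^\<^sub>m k) $$ (i,j)" using ij A by simp
    moreover have "norm ((A' ^\<^sub>m k) $$ (i,j)) \<le> c" using c[of k] ij A' unfolding norm_bound_def by auto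
    ultimately have "(1/\<rho>)^k * norm ((A ^\<^sub>m k) $$ (i,j)) \<le> c" using rho by (simp add: norm_mult norm_power norm_divide)
    hence "\<rho>^k * ((1/\<rho>)^k * norm ((A ^\<^sub>m k) $$ (i,j))) \<le> \<rho>^k * c" using rho by (intro mult_left_mono) auto
    thus ?thesis using rho by (simp add: power_one_over field_simps)
  qed
  thus ?thesis using rho by (intro exI[of _ c] exI[of _ \<rho>]) auto
qed

lemma pow_decay_real:
  assumes M: "(M :: real mat) \<in> carrier_mat m m"
    and ev: "\<And>mu. eigenvalue (map_mat complex_of_real M) mu \<Longrightarrow> cmod mu < 1"
  shows "\<exists>c \<rho>. 0 \<le> \<rho> \<and> \<rho> < 1 \<and> (\<forall>k i j. i < m \<longrightarrow> j < m \<longrightarrow> \<bar>(M ^\<^sub>m k) $$ (i,j)\<bar> \<le> c * \<rho>^k)"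
proof -
  have Mc: "map_mat complex_of_real M \<in> carrier_mat m m" using M by auto
  from pow_decay_complex[OF Mc ev] obtain c \<rho> where cr: "0 \<le> \<rho>" "\<rho> < 1"
    "\<And>k i j. i < m \<Longrightarrow> j < m \<Longrightarrow> cmod (((map_mat complex_of_real M) ^\<^sub>m k) $$ (i,j)) \<le> c * \<rho>^k" by blast
  have "\<bar>(M ^\<^sub>m k) $$ (i,j)\<bar> \<le> c * \<rho>^k" if ij: "i < m" "j < m" for k i j
  proof -
    have "(map_mat complex_of_real M) ^\<^sub>m k = map_mat complex_of_real (M ^\<^sub>m k)"
      using of_real_hom.mat_hom_pow[OF M, of k, symmetric] by simp
    hence "((map_mat complex_of_real M) ^\<^sub>m k) $$ (i,j) = complex_of_real ((M ^\<^sub>m k) $$ (i,j))"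
      using ij M by simp
    with cr(3)[OF ij, of k] show ?thesis by simp
  qed
  thus ?thesis using cr(1,2) by blast
qed



lemma GammaL_carrier[simp]: "GammaL c L \<in> carrier_mat c (length L)"
  by (simp add: GammaL_def)

lemma GammaL_dims[simp]: "dim_row (GammaL c L) = c" "dim_col (GammaL c L) = length L"
  by (simp_all add: GammaL_def)

lemma GammaL_index[simp]: "i < c \<Longrightarrow> j < length L \<Longrightarrow> GammaL c L $$ (i,j) = (if i + 1 = L ! j then 1 else 0)"
  by (simp add: GammaL_def)

lemma sum_delta_aux:
  fixes p q c :: nat
  assumes "1 \<le> p" "p \<le> c"
  shows "(\<Sum>a\<in>{0..<c}. (if a + 1 = p then (1::real) else 0) * (if a + 1 = q then 1 else 0)) = (if p = q then 1 else 0)"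
proof -
  have "(\<Sum>a\<in>{0..<c}. (if a + 1 = p then (1::real) else 0) * (if a + 1 = q then 1 else 0))
      = (\<Sum>a\<in>{0..<c}. if a = p - 1 then (if p = q then 1 else 0) else 0)"
    using assms by (intro sum.cong) auto
  also have "\<dots> = (if p = q then 1 else 0)" using assms by auto
  finally show ?thesis .
qed

lemma GammaL_TG:
  assumes d: "distinct L" and s: "set L \<subseteq> {1..c}"
  shows "transpose_mat (GammaL c L) * GammaL c L = 1\<^sub>m (length L)"
proof (rule eq_matI)
  fix i j assume ij: "i < dim_row (1\<^sub>m (length L))" "j < dim_col (1\<^sub>m (length L))"
  hence ij: "i < length L" "j < length L" by auto
  have p: "1 \<le> L ! i" "L ! i \<le> c" using s nth_mem[OF ij(1)] by auto
  have "(transpose_mat (GammaL c L) * GammaL c L) $$ (i,j)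
     = (\<Sum>a\<in>{0..<c}. (if a + 1 = L ! i then (1::real) else 0) * (if a + 1 = L ! j then 1 else 0))"
    using ij by (simp add: scalar_prod_def)
  also have "\<dots> = (if L ! i = L ! j then 1 else 0)" by (rule sum_delta_aux[OF p])
  also have "\<dots> = 1\<^sub>m (length L) $$ (i,j)" using ij d by (simp add: nth_eq_iff_index_eq)
  finally show "(transpose_mat (GammaL c L) * GammaL c L) $$ (i,j) = 1\<^sub>m (length L) $$ (i,j)" .
qed auto

lemma GammaL_GT:
  assumes d: "distinct L" and s: "set L = {1..c}"
  shows "GammaL c L * transpose_mat (GammaL c L) = 1\<^sub>m c"
proof (rule eq_matI)
  fix a a' assume aa: "a < dim_row (1\<^sub>m c)" "a' < dim_col (1\<^sub>m c)"
  hence aa: "a < c" "a' < c" by auto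
  have "a + 1 \<in> set L" using s aa by auto
  then obtain b0 where b0: "b0 < length L" "L ! b0 = a + 1" by (auto simp: in_set_conv_nth)
  have "(GammaL c L * transpose_mat (GammaL c L)) $$ (a,a')
     = (\<Sum>b\<in>{0..<length L}. (if a + 1 = L ! b then (1::real) else 0) * (if a' + 1 = L ! b then 1 else 0))"
    using aa by (simp add: scalar_prod_def)
  also have "\<dots> = (\<Sum>b\<in>{0..<length L}. if b = b0 then (if a' = a then 1 else 0) else 0)"
  proof (intro sum.cong refl)
    fix b assume "b \<in> {0..<length L}"
    hence "b < length L" by auto
    hence "(a + 1 = L ! b) = (b = b0)" using b0 d by (metis nth_eq_iff_index_eq)
    thus "(if a + 1 = L ! b then (1::real) else 0) * (if a' + 1 = L ! b then 1 else 0)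
       = (if b = b0 then (if a' = a then 1 else 0) else 0)" using b0 by auto
  qed
  also have "\<dots> = 1\<^sub>m c $$ (a,a')" using b0 aa by auto
  finally show "(GammaL c L * transpose_mat (GammaL c L)) $$ (a,a') = 1\<^sub>m c $$ (a,a')" .
qed auto

lemma GammaL_upto:
  assumes k: "k \<le> length L"
  shows "GammaL c L * GammaL (length L) [1..<k+1] = GammaL c (take k L)"
proof (rule eq_matI)
  fix a b assume ab: "a < dim_row (GammaL c (take k L))" "b < dim_col (GammaL c (take k L))"
  hence ab: "a < c" "b < k" using k by auto
  have "(GammaL c L * GammaL (length L) [1..<k+1]) $$ (a,b)
     = (\<Sum>j\<in>{0..<length L}. (if a + 1 = L ! j then (1::real) else 0) * (if j + 1 = [1..<k+1] ! b then 1 else 0))"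
    using ab by (simp add: scalar_prod_def)
  also have "\<dots> = (\<Sum>j\<in>{0..<length L}. if j = b then (if a + 1 = L ! b then 1 else 0) else 0)"
  proof (intro sum.cong refl)
    fix j assume "j \<in> {0..<length L}"
    have "[1..<k+1] ! b = b + 1" using ab by (simp del: upt_Suc add: nth_upt)
    thus "(if a + 1 = L ! j then (1::real) else 0) * (if j + 1 = [1..<k+1] ! b then 1 else 0) =
       (if j = b then (if a + 1 = L ! b then 1 else 0) else 0)" by auto
  qed
  also have "\<dots> = GammaL c (take k L) $$ (a,b)" using ab k by auto
  finally show "(GammaL c L * GammaL (length L) [1..<k+1]) $$ (a,b) = GammaL c (take k L) $$ (a,b)" .
qed (use k in auto)

lemma the_mat_inverse:
  assumes T: "(T :: real mat) \<in> carrier_mat c c" and U: "U \<in> carrier_mat c c"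
    and TU: "T * U = 1\<^sub>m c" and UT: "U * T = 1\<^sub>m c"
  shows "the (mat_inverse T) = U"
proof (cases "mat_inverse T")
  case None
  from mat_inverse(1)[OF T None, of c] have "T \<notin> Units (ring_mat TYPE(real) c c)" .
  moreover have "T \<in> Units (ring_mat TYPE(real) c c)"
    using T U TU UT unfolding Units_def ring_mat_def by auto
  ultimately show ?thesis by blast
next
  case (Some B)
  from mat_inverse(2)[OF T Some] have B: "T * B = 1\<^sub>m c" "B \<in> carrier_mat c c" by auto
  have "U = U * (T * B)" using B U by simp
  also have "\<dots> = (U * T) * B" using U T B by (simp add: assoc_mult_mat[OF U T B(2)])
  also have "\<dots> = B" using UT B by simp
  finally show ?thesis using Some by simp
qed



lemma Dset_facts:
  assumes "S1 \<subseteq> {1..n}"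
  shows "Dset n S1 \<subseteq> {1..2*n}" "finite (Dset n S1)" "card (Dset n S1) = 2 * card S1"
proof -
  show "Dset n S1 \<subseteq> {1..2*n}" using assms unfolding Dset_def by auto
  thus fin: "finite (Dset n S1)" by (rule finite_subset) auto
  have f1: "finite S1" using assms by (rule finite_subset) auto
  have disj: "S1 \<inter> (\<lambda>i. i + n) ` S1 = {}"
  proof (rule ccontr)
    assume "S1 \<inter> (\<lambda>i. i + n) ` S1 \<noteq> {}"
    then obtain i where i: "i \<in> S1" "i + n \<in> S1" by auto
    hence "1 \<le> i" "i + n \<le> n" using assms by auto
    thus False by simp
  qed
  have "card (Dset n S1) = card S1 + card ((\<lambda>i. i + n) ` S1)"
    unfolding Dset_def using f1 disj by (intro card_Un_disjoint) auto
  also have "card ((\<lambda>i. i + n) ` S1) = card S1" by (rule card_image) (auto simp: inj_on_def)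
  finally show "card (Dset n S1) = 2 * card S1" by simp
qed

lemma Bmat_carrier:
  assumes "D1 \<subseteq> {1..n}"
  shows "Bmat n par r x D1 \<in> carrier_mat (2*n) (card (Dset n D1))"
proof -
  have G: "Gamma n D1 \<in> carrier_mat n (card D1)" unfolding Gamma_def
    using GammaL_carrier[of n "sorted_list_of_set D1"] by simp
  have P: "\<And>r. path_mat n par r \<in> carrier_mat n n" unfolding path_mat_def by simp
  have X: "\<And>r. path_mat n par r * Gamma n D1 \<in> carrier_mat n (card D1)" by (rule mult_carrier_mat[OF P G])
  show ?thesis unfolding Bmat_def Let_def Dset_facts(3)[OF assms] mult_2
    by (intro four_block_carrier_mat X smult_carrier_mat)
qed

lemma structure_lemma:
  assumes S1: "S1 \<subseteq> {1..n}" and D1: "D1 \<subseteq> {1..n}" and SD: "Dset n S1 \<subseteq> Dset n D1"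
  shows "Cbar n D1 S1 = 1\<^sub>m (card (Dset n S1))"
    "Bbar n par r x D1 S1 = Cmat n S1 * Bmat n par r x D1"
proof -
  define S where "S = Dset n S1"
  define D where "D = Dset n D1"
  define U where "U = {1..2*n}"
  define xs where "xs = sorted_list_of_set S"
  define s where "s = card S"
  define L where "L = sorted_list_of_set (S \<inter> D) @ sorted_list_of_set (S \<inter> (U - D)) @
                       sorted_list_of_set ((U - S) \<inter> D) @ sorted_list_of_set ((U - S) \<inter> (U - D))"
  have SU: "S \<subseteq> U" and finS: "finite S" using Dset_facts[OF S1] unfolding S_def U_def by auto
  have SD': "S \<subseteq> D" using SD unfolding S_def D_def .
  have finU: "finite U" unfolding U_def by auto
  have L': "L = xs @ sorted_list_of_set ((U - S) \<inter> D) @ sorted_list_of_set ((U - S) \<inter> (U - D))"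
  proof -
    have "S \<inter> D = S" "S \<inter> (U - D) = {}" using SD' by auto
    thus ?thesis unfolding L_def xs_def by simp
  qed
  have distL: "distinct L" unfolding L' xs_def using finS finU by auto
  have setL: "set L = U" unfolding L' xs_def using finS finU SU by auto
  have lenL: "length L = 2*n" using distinct_card[OF distL] setL unfolding U_def by simp
  have lenxs: "length xs = s" unfolding xs_def s_def by simp
  have sle: "s \<le> length L" unfolding L' lenxs[symmetric] by simp
  have takeL: "take s L = xs" unfolding L' lenxs[symmetric] by simp
  have T: "Tmat n D1 S1 = GammaL (2*n) L"
    unfolding Tmat_def Let_def L_def S_def D_def U_def ..
  have G: "Gmat n s = GammaL (length L) [1..<s+1]"
  proof -
    have "{1..s} = {1..<s+1}" by auto
    thus ?thesis unfolding Gmat_def Gamma_def lenL by simp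
  qed
  have C: "Cmat n S1 = transpose_mat (GammaL (2*n) xs)" unfolding Cmat_def Gamma_def xs_def S_def ..
  have TG: "Tmat n D1 S1 * Gmat n s = GammaL (2*n) xs"
    unfolding T G using GammaL_upto[OF sle, of "2*n"] takeL by simp
  have distxs: "distinct xs" and setxs: "set xs \<subseteq> {1..2*n}"
    unfolding xs_def using finS SU U_def by auto
  have Tc: "Tmat n D1 S1 \<in> carrier_mat (2*n) (2*n)" unfolding T using GammaL_carrier[of "2*n" L] lenL by simp
  have Gc: "Gmat n s \<in> carrier_mat (2*n) s" unfolding G using GammaL_carrier[of "length L" "[1..<s+1]"] lenL by (simp del: upt_Suc)
  have Cc: "Cmat n S1 \<in> carrier_mat s (2*n)" unfolding C using GammaL_carrier[of "2*n" xs] unfolding lenxs by simp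
  show "Cbar n D1 S1 = 1\<^sub>m (card (Dset n S1))"
  proof -
    have "Cbar n D1 S1 = Cmat n S1 * Tmat n D1 S1 * Gmat n s" unfolding Cbar_def s_def S_def ..
    also have "\<dots> = Cmat n S1 * (Tmat n D1 S1 * Gmat n s)" using Cc Tc Gc by simp
    also have "\<dots> = 1\<^sub>m (length xs)" unfolding TG C by (rule GammaL_TG[OF distxs setxs])
    finally show ?thesis unfolding lenxs s_def S_def .
  qed
  have inv: "the (mat_inverse (Tmat n D1 S1)) = transpose_mat (Tmat n D1 S1)"
    apply (rule the_mat_inverse[OF Tc])
    using Tc apply simp
    unfolding T using GammaL_GT[OF distL setL[unfolded U_def]] GammaL_TG[OF distL, of "2*n"] setL lenL U_def
    by auto
  show "Bbar n par r x D1 S1 = Cmat n S1 * Bmat n par r x D1"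
  proof -
    have "transpose_mat (Gmat n s) * the (mat_inverse (Tmat n D1 S1)) = transpose_mat (Tmat n D1 S1 * Gmat n s)"
      unfolding inv by (rule transpose_mult[OF Tc Gc, symmetric])
    also have "\<dots> = Cmat n S1" unfolding TG C ..
    finally show ?thesis unfolding Bbar_def s_def[symmetric] S_def[symmetric] by simp
  qed
qed



definition sabs :: "real vec \<Rightarrow> real" where
  "sabs v = (\<Sum>j\<in>{0..<dim_vec v}. \<bar>v $ j\<bar>)"

lemma sabs_nonneg: "sabs v \<ge> 0" unfolding sabs_def by (intro sum_nonneg) auto

lemma sabs_ge: "i < dim_vec v \<Longrightarrow> \<bar>v $ i\<bar> \<le> sabs v"
  unfolding sabs_def by (rule member_le_sum) auto

lemma traj_pow:
  assumes M: "M \<in> carrier_mat m m" and tr: "is_traj m M e"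
  shows "e (k + j) = M ^\<^sub>m k *\<^sub>v e j"
proof (induct k arbitrary: j)
  case 0
  have "e j \<in> carrier_vec m" using tr unfolding is_traj_def by auto
  thus ?case using M by simp
next
  case (Suc k)
  have ej: "e j \<in> carrier_vec m" using tr unfolding is_traj_def by auto
  have "e (Suc k + j) = e (k + Suc j)" by simp
  also have "\<dots> = M ^\<^sub>m k *\<^sub>v e (Suc j)" by (rule Suc)
  also have "\<dots> = M ^\<^sub>m k *\<^sub>v (M *\<^sub>v e j)" using tr unfolding is_traj_def by auto
  also have "\<dots> = (M ^\<^sub>m k * M) *\<^sub>v e j" using M ej
    by (simp add: assoc_mult_mat_vec[OF pow_carrier_mat[OF M] M ej])
  finally show ?case by simp
qed

lemma mv_bound:
  assumes A: "(A :: real mat) \<in> carrier_mat nr nc" and v: "v \<in> carrier_vec nc" and i: "i < nr"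
    and b: "\<And>j. j < nc \<Longrightarrow> \<bar>A $$ (i,j)\<bar> \<le> b"
  shows "\<bar>(A *\<^sub>v v) $ i\<bar> \<le> b * sabs v"
proof -
  have "(A *\<^sub>v v) $ i = (\<Sum>j\<in>{0..<nc}. A $$ (i,j) * v $ j)"
    using A v i by (simp add: mult_mat_vec_def scalar_prod_def row_def)
  hence "\<bar>(A *\<^sub>v v) $ i\<bar> \<le> (\<Sum>j\<in>{0..<nc}. \<bar>A $$ (i,j) * v $ j\<bar>)" by (simp add: sum_abs)
  also have "\<dots> \<le> (\<Sum>j\<in>{0..<nc}. b * \<bar>v $ j\<bar>)"
    by (intro sum_mono) (auto simp: abs_mult intro: mult_right_mono b)
  also have "\<dots> = b * sabs v" using v unfolding sabs_def by (simp add: sum_distrib_left)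
  finally show ?thesis .
qed

lemma mat_bound: "\<exists>b \<ge> 0. \<forall>i j. i < nr \<longrightarrow> j < nc \<longrightarrow> \<bar>(A :: real mat) $$ (i,j)\<bar> \<le> b"
proof (intro exI[of _ "\<Sum>i\<in>{0..<nr}. \<Sum>j\<in>{0..<nc}. \<bar>A $$ (i,j)\<bar>"] conjI allI impI)
  show "0 \<le> (\<Sum>i\<in>{0..<nr}. \<Sum>j\<in>{0..<nc}. \<bar>A $$ (i,j)\<bar>)" by (intro sum_nonneg) auto
  fix i j assume ij: "i < nr" "j < nc"
  have "\<bar>A $$ (i,j)\<bar> \<le> (\<Sum>j\<in>{0..<nc}. \<bar>A $$ (i,j)\<bar>)" using ij by (intro member_le_sum) auto
  also have "\<dots> \<le> (\<Sum>i\<in>{0..<nr}. \<Sum>j\<in>{0..<nc}. \<bar>A $$ (i,j)\<bar>)"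
    using ij by (intro member_le_sum[of i "{0..<nr}" "\<lambda>i. \<Sum>j\<in>{0..<nc}. \<bar>A $$ (i,j)\<bar>"] sum_nonneg) auto
  finally show "\<bar>A $$ (i,j)\<bar> \<le> (\<Sum>i\<in>{0..<nr}. \<Sum>j\<in>{0..<nc}. \<bar>A $$ (i,j)\<bar>)" .
qed

lemma C_select:
  assumes S1: "S1 \<subseteq> {1..n}" and p: "p \<in> Dset n S1"
  shows "\<exists>l < card (Dset n S1). \<forall>v \<in> carrier_vec (2*n). (Cmat n S1 *\<^sub>v v) $ l = v $ (p - 1)"
proof -
  define xs where "xs = sorted_list_of_set (Dset n S1)"
  have fin: "finite (Dset n S1)" and sub: "Dset n S1 \<subseteq> {1..2*n}" using Dset_facts[OF S1] by auto
  have "p \<in> set xs" unfolding xs_def using fin p by auto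
  then obtain l where l: "l < length xs" "xs ! l = p" by (auto simp: in_set_conv_nth)
  have len: "length xs = card (Dset n S1)" unfolding xs_def by simp
  have p1: "1 \<le> p" "p \<le> 2*n" using sub p by auto
  have C: "Cmat n S1 = transpose_mat (GammaL (2*n) xs)" unfolding Cmat_def Gamma_def xs_def ..
  have "(Cmat n S1 *\<^sub>v v) $ l = v $ (p - 1)" if v: "v \<in> carrier_vec (2*n)" for v
  proof -
  have "(Cmat n S1 *\<^sub>v v) $ l = (\<Sum>a\<in>{0..<2*n}. (if a + 1 = p then 1 else 0) * v $ a)"
    unfolding C using l v by (simp add: mult_mat_vec_def scalar_prod_def)
  also have "\<dots> = (\<Sum>a\<in>{0..<2*n}. if a = p - 1 then v $ (p - 1) else 0)"
    using p1 by (intro sum.cong) auto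
  also have "\<dots> = v $ (p - 1)" using p1 by auto
  finally show ?thesis .
  qed
  thus ?thesis using l len by auto
qed



lemma geom_bound: assumes "0 \<le> (\<rho>::real)" "\<rho> < 1" shows "(\<Sum>j<k. \<rho>^j) \<le> 1 / (1 - \<rho>)"
proof -
  have "(\<Sum>j<k. \<rho>^j) = (1 - \<rho>^k) / (1 - \<rho>)" using assms by (simp add: sum_gp_strict)
  also have "\<dots> \<le> 1 / (1 - \<rho>)" using assms by (intro divide_right_mono) auto
  finally show ?thesis .
qed

theorem theorem2:
  fixes n :: nat and par :: "nat \<Rightarrow> nat" and r x :: "nat \<Rightarrow> real"
    and D1 S1 :: "nat set" and F :: "real mat"
  assumes n: "n \<ge> 1"
    and tree: "is_rooted_tree n par"
    and D1: "D1 \<subseteq> {1..n}" "D1 \<noteq> {}"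
    and S1: "S1 \<subseteq> {1..n}" "S1 \<noteq> {}"
    and SD: "Dset n S1 \<subseteq> Dset n D1"
    and F: "F \<in> carrier_mat (card (Dset n D1)) (card (Dset n S1))"
    and eig: "\<And>mu. eigenvalue (map_mat complex_of_real
                 (Bbar n par r x D1 S1 * (F * Cbar n D1 S1))) mu \<Longrightarrow> cmod (mu - 1) < 1"
  shows
    "(\<forall>eb. is_traj (card (Dset n S1))
             (1\<^sub>m (card (Dset n S1)) - Bbar n par r x D1 S1 * (F * Cbar n D1 S1)) eb
          \<longrightarrow> (\<forall>i < card (Dset n S1). exp_conv (\<lambda>k. eb k $ i)))
     \<and> (\<forall>\<epsilon>>0. \<exists>\<delta>>0. \<forall>e. is_traj (2*n) (1\<^sub>m (2*n) - Bmat n par r x D1 * F * Cmat n S1) e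
          \<longrightarrow> (\<forall>i < 2*n. \<bar>e 0 $ i\<bar> < \<delta>) \<longrightarrow> (\<forall>k. \<forall>i < 2*n. \<bar>e k $ i\<bar> < \<epsilon>))
     \<and> (\<forall>e. is_traj (2*n) (1\<^sub>m (2*n) - Bmat n par r x D1 * F * Cmat n S1) e
          \<longrightarrow> (\<exists>M. \<forall>k. \<forall>i < 2*n. \<bar>e k $ i\<bar> \<le> M))
     \<and> (\<forall>e. is_traj (2*n) (1\<^sub>m (2*n) - Bmat n par r x D1 * F * Cmat n S1) e
          \<longrightarrow> (\<forall>p \<in> Dset n S1. exp_conv (\<lambda>k. e k $ (p - 1))))"
proof -
  define s where "s = card (Dset n S1)"
  define d where "d = card (Dset n D1)"
  define B where "B = Bmat n par r x D1"
  define C where "C = Cmat n S1"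
  have Bc: "B \<in> carrier_mat (2*n) d" using Bmat_carrier[OF D1(1)] unfolding B_def d_def .
  have Cc: "C \<in> carrier_mat s (2*n)" unfolding C_def Cmat_def Gamma_def s_def
    using GammaL_carrier[of "2*n" "sorted_list_of_set (Dset n S1)"] by simp
  have Fc: "F \<in> carrier_mat d s" using F unfolding d_def s_def .
  note st = structure_lemma[OF S1(1) D1(1) SD]
  define Hb where "Hb = C * (B * F)"
  have Hbc: "Hb \<in> carrier_mat s s" unfolding Hb_def using Cc Bc Fc by auto
  have Hb_eq: "Bbar n par r x D1 S1 * (F * Cbar n D1 S1) = Hb"
  proof -
    have "Bbar n par r x D1 S1 * (F * Cbar n D1 S1) = (C * B) * F"
      unfolding st(1) st(2) B_def[symmetric] C_def[symmetric] s_def[symmetric] using Fc by simp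
    also have "\<dots> = Hb" unfolding Hb_def using Cc Bc Fc by simp
    finally show ?thesis .
  qed
  define Mb where "Mb = 1\<^sub>m s - Hb"
  have Mbc: "Mb \<in> carrier_mat s s" unfolding Mb_def using Hbc by (rule minus_carrier_mat)
  have eigM: "cmod mu < 1" if ev: "eigenvalue (map_mat complex_of_real Mb) mu" for mu
  proof -
    let ?H = "map_mat complex_of_real Hb"
    have Hc: "?H \<in> carrier_mat s s" using Hbc by simp
    have map: "map_mat complex_of_real Mb = 1\<^sub>m s - ?H"
      unfolding Mb_def using Hbc by (intro eq_matI) auto
    from ev obtain v where v: "eigenvector (1\<^sub>m s - ?H) v mu" unfolding eigenvalue_def map by auto
    hence vc: "v \<in> carrier_vec s" "v \<noteq> 0\<^sub>v s" and Av: "(1\<^sub>m s - ?H) *\<^sub>v v = mu \<cdot>\<^sub>v v"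
      using Hc unfolding eigenvector_def by auto
    have "(1\<^sub>m s - ?H) *\<^sub>v v = v - ?H *\<^sub>v v"
      using Hc vc by (simp add: minus_mult_distrib_mat_vec[OF one_carrier_mat Hc vc(1)])
    hence eq: "v - ?H *\<^sub>v v = mu \<cdot>\<^sub>v v" using Av by simp
    have "?H *\<^sub>v v = (1 - mu) \<cdot>\<^sub>v v"
    proof (rule eq_vecI)
      fix i assume "i < dim_vec ((1 - mu) \<cdot>\<^sub>v v)"
      hence i: "i < s" using vc by auto
      from arg_cong[OF eq, of "\<lambda>w. w $ i"] have "v $ i - (?H *\<^sub>v v) $ i = mu * v $ i"
        using i vc Hc by simp
      thus "(?H *\<^sub>v v) $ i = ((1 - mu) \<cdot>\<^sub>v v) $ i" using i vc by (simp add: algebra_simps)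
    qed (use vc Hc in auto)
    hence "eigenvector ?H v (1 - mu)" using vc Hc unfolding eigenvector_def by auto
    hence "eigenvalue ?H (1 - mu)" unfolding eigenvalue_def by auto
    from eig[unfolded Hb_eq, OF this] show ?thesis by (simp add: norm_minus_commute)
  qed
  from pow_decay_real[OF Mbc eigM] obtain c0 \<rho> where rho: "0 \<le> \<rho>" "\<rho> < 1"
    and pb: "\<And>k i j. i < s \<Longrightarrow> j < s \<Longrightarrow> \<bar>(Mb ^\<^sub>m k) $$ (i,j)\<bar> \<le> c0 * \<rho>^k" by blast
  define c where "c = \<bar>c0\<bar>"
  have c0: "c \<ge> 0" unfolding c_def by simp
  have decay: "\<bar>(Mb ^\<^sub>m k *\<^sub>v w) $ i\<bar> \<le> c * \<rho>^k * sabs w" if w: "w \<in> carrier_vec s" and i: "i < s" for w k i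
  proof (rule mv_bound[OF pow_carrier_mat[OF Mbc] w i])
    fix j assume "j < s"
    from pb[OF i this, of k] show "\<bar>(Mb ^\<^sub>m k) $$ (i,j)\<bar> \<le> c * \<rho>^k" unfolding c_def
      using rho by (smt (verit) mult_right_mono zero_le_power)
  qed
  have trajb: "\<bar>eb k $ i\<bar> \<le> c * \<rho>^k * sabs (eb 0)" if tr: "is_traj s Mb eb" and i: "i < s" for eb k i
  proof -
    have "eb (k + 0) = Mb ^\<^sub>m k *\<^sub>v eb 0" by (rule traj_pow[OF Mbc tr])
    moreover have "eb 0 \<in> carrier_vec s" using tr unfolding is_traj_def by auto
    ultimately show ?thesis using decay[OF _ i] by simp
  qed
  have expb: "exp_conv (\<lambda>k. eb k $ i)" if tr: "is_traj s Mb eb" and i: "i < s" for eb i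
  proof -
    have "\<bar>eb k $ i\<bar> \<le> c * sabs (eb 0) * \<rho> ^ k" for k using trajb[OF tr i, of k] by (simp add: ac_simps)
    thus ?thesis unfolding exp_conv_def using rho by blast
  qed
  define M where "M = 1\<^sub>m (2*n) - B * F * C"
  have BFc: "B * F \<in> carrier_mat (2*n) s" using Bc Fc by simp
  have stepe: "e (Suc k) = e k - (B * F) *\<^sub>v (C *\<^sub>v e k)"
    and stepb: "C *\<^sub>v e (Suc k) = Mb *\<^sub>v (C *\<^sub>v e k)"
    and ecar: "e k \<in> carrier_vec (2*n)"
    if tr: "is_traj (2*n) M e" for e k
  proof -
    show ek: "e k \<in> carrier_vec (2*n)" using tr unfolding is_traj_def by auto
    have BFCc: "B * F * C \<in> carrier_mat (2*n) (2*n)" using BFc Cc by simp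
    have Cek: "C *\<^sub>v e k \<in> carrier_vec s" using Cc ek by simp
    have "e (Suc k) = M *\<^sub>v e k" using tr unfolding is_traj_def by auto
    also have "\<dots> = e k - (B * F * C) *\<^sub>v e k" unfolding M_def
      using minus_mult_distrib_mat_vec[OF one_carrier_mat BFCc ek] ek by simp
    also have "(B * F * C) *\<^sub>v e k = (B * F) *\<^sub>v (C *\<^sub>v e k)"
      by (rule assoc_mult_mat_vec[OF BFc Cc ek])
    finally show es: "e (Suc k) = e k - (B * F) *\<^sub>v (C *\<^sub>v e k)" .
    have w: "(B * F) *\<^sub>v (C *\<^sub>v e k) \<in> carrier_vec (2*n)" using BFc Cek by simp
    have "C *\<^sub>v e (Suc k) = C *\<^sub>v e k - C *\<^sub>v ((B * F) *\<^sub>v (C *\<^sub>v e k))"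
      unfolding es by (rule mult_minus_distrib_mat_vec[OF Cc ek w])
    also have "C *\<^sub>v ((B * F) *\<^sub>v (C *\<^sub>v e k)) = Hb *\<^sub>v (C *\<^sub>v e k)"
      unfolding Hb_def by (rule assoc_mult_mat_vec[OF Cc BFc Cek, symmetric])
    also have "C *\<^sub>v e k - Hb *\<^sub>v (C *\<^sub>v e k) = Mb *\<^sub>v (C *\<^sub>v e k)"
      unfolding Mb_def using minus_mult_distrib_mat_vec[OF one_carrier_mat Hbc Cek] Cek by simp
    finally show "C *\<^sub>v e (Suc k) = Mb *\<^sub>v (C *\<^sub>v e k)" .
  qed
  have trajC: "is_traj s Mb (\<lambda>k. C *\<^sub>v e k)" if tr: "is_traj (2*n) M e" for e
    unfolding is_traj_def using stepb[OF tr] ecar[OF tr] Cc by auto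
  obtain \<beta> where \<beta>: "\<beta> \<ge> 0" "\<And>i j. i < 2*n \<Longrightarrow> j < s \<Longrightarrow> \<bar>(B * F) $$ (i,j)\<bar> \<le> \<beta>"
    using mat_bound[of "2*n" s "B * F"] by blast
  obtain \<gamma> where \<gamma>: "\<gamma> \<ge> 0" "\<And>i j. i < s \<Longrightarrow> j < 2*n \<Longrightarrow> \<bar>C $$ (i,j)\<bar> \<le> \<gamma>"
    using mat_bound[of s "2*n" C] by blast
  define K where "K = \<beta> * (real s * c) * (real s * \<gamma>)"
  have K0: "K \<ge> 0" unfolding K_def using \<beta> \<gamma> c0 by simp
  define Q where "Q = 1 + K / (1 - \<rho>)"
  have Q1: "Q \<ge> 1" unfolding Q_def using K0 rho by simp
  have ebound: "\<bar>e k $ i\<bar> \<le> Q * sabs (e 0)" if tr: "is_traj (2*n) M e" and i: "i < 2*n" for e k i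
  proof -
    let ?eb = "\<lambda>k. C *\<^sub>v e k"
    have sum_eq: "e k $ i = e 0 $ i - (\<Sum>j<k. ((B * F) *\<^sub>v ?eb j) $ i)" for k
    proof (induct k)
      case (Suc k)
      have "e (Suc k) $ i = e k $ i - ((B * F) *\<^sub>v ?eb k) $ i"
        unfolding stepe[OF tr, of k] using i ecar[OF tr, of k] Bc Fc Cc by simp
      thus ?case using Suc by simp
    qed simp
    have eb0: "sabs (?eb 0) \<le> real s * \<gamma> * sabs (e 0)"
    proof -
      have "sabs (?eb 0) = (\<Sum>l\<in>{0..<s}. \<bar>?eb 0 $ l\<bar>)" unfolding sabs_def using Cc by simp
      also have "\<dots> \<le> (\<Sum>l\<in>{0..<s}. \<gamma> * sabs (e 0))"
        by (intro sum_mono mv_bound[OF Cc ecar[OF tr]] \<gamma>) auto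
      finally show ?thesis by simp
    qed
    have ebj: "sabs (?eb j) \<le> real s * c * \<rho>^j * sabs (?eb 0)" for j
    proof -
      have "sabs (?eb j) = (\<Sum>l\<in>{0..<s}. \<bar>?eb j $ l\<bar>)" unfolding sabs_def using Cc by simp
      also have "\<dots> \<le> (\<Sum>l\<in>{0..<s}. c * \<rho>^j * sabs (?eb 0))"
        by (intro sum_mono trajb[OF trajC[OF tr]]) auto
      finally show ?thesis by simp
    qed
    have termb: "\<bar>((B * F) *\<^sub>v ?eb j) $ i\<bar> \<le> K * \<rho>^j * sabs (e 0)" for j
    proof -
      have "\<bar>((B * F) *\<^sub>v ?eb j) $ i\<bar> \<le> \<beta> * sabs (?eb j)"
        using Cc ecar[OF tr, of j] i by (intro mv_bound[OF BFc _ i] \<beta>) auto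
      also have "\<dots> \<le> \<beta> * (real s * c * \<rho>^j * (real s * \<gamma> * sabs (e 0)))"
        using ebj[of j] eb0 \<beta>(1) c0 rho
        by (intro mult_left_mono order.trans[OF ebj[of j]] mult_left_mono eb0) (auto simp: zero_le_mult_iff)
      also have "\<dots> = K * \<rho>^j * sabs (e 0)" unfolding K_def by (simp add: ac_simps)
      finally show ?thesis .
    qed
    have "\<bar>e k $ i\<bar> \<le> \<bar>e 0 $ i\<bar> + (\<Sum>j<k. \<bar>((B * F) *\<^sub>v ?eb j) $ i\<bar>)"
      unfolding sum_eq[of k]
      using sum_abs[of "\<lambda>j. ((B * F) *\<^sub>v ?eb j) $ i" "{..<k}"]
        abs_triangle_ineq4[of "e 0 $ i" "\<Sum>j<k. ((B * F) *\<^sub>v ?eb j) $ i"] by linarith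
    also have "\<dots> \<le> sabs (e 0) + (\<Sum>j<k. K * sabs (e 0) * \<rho>^j)"
      using sabs_ge[of i "e 0"] ecar[OF tr, of 0] i termb by (intro add_mono sum_mono) (auto simp: ac_simps)
    also have "(\<Sum>j<k. K * sabs (e 0) * \<rho>^j) = K * sabs (e 0) * (\<Sum>j<k. \<rho>^j)"
      by (simp add: sum_distrib_left)
    also have "\<dots> \<le> K * sabs (e 0) * (1 / (1 - \<rho>))"
      using K0 sabs_nonneg geom_bound[OF rho] by (intro mult_left_mono) auto
    finally show ?thesis unfolding Q_def using rho by (simp add: algebra_simps)
  qed
  have P1: "\<forall>eb. is_traj s Mb eb \<longrightarrow> (\<forall>i < s. exp_conv (\<lambda>k. eb k $ i))" using expb by blast
  have P2: "\<forall>\<epsilon>>0. \<exists>\<delta>>0. \<forall>e. is_traj (2*n) M e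
          \<longrightarrow> (\<forall>i < 2*n. \<bar>e 0 $ i\<bar> < \<delta>) \<longrightarrow> (\<forall>k. \<forall>i < 2*n. \<bar>e k $ i\<bar> < \<epsilon>)"
  proof (intro allI impI)
    fix \<epsilon> :: real assume eps: "\<epsilon> > 0"
    define N where "N = 2 * real n * Q"
    have N0: "N \<ge> 0" unfolding N_def using Q1 by simp
    define \<delta> where "\<delta> = \<epsilon> / (N + 1)"
    have d0: "\<delta> > 0" unfolding \<delta>_def using eps N0 by simp
    have "\<bar>e k $ i\<bar> < \<epsilon>" if tr: "is_traj (2*n) M e" and small: "\<forall>i < 2*n. \<bar>e 0 $ i\<bar> < \<delta>"
      and i: "i < 2*n" for e k i
    proof -
      have "sabs (e 0) = (\<Sum>j\<in>{0..<2*n}. \<bar>e 0 $ j\<bar>)" unfolding sabs_def using ecar[OF tr, of 0] by simp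
      also have "\<dots> \<le> (\<Sum>j\<in>{0..<2*n}. \<delta>)" using small by (intro sum_mono) (auto intro: less_imp_le)
      finally have se: "sabs (e 0) \<le> 2 * real n * \<delta>" by simp
      have "\<bar>e k $ i\<bar> \<le> Q * sabs (e 0)" by (rule ebound[OF tr i])
      also have "\<dots> \<le> Q * (2 * real n * \<delta>)" using se Q1 by (intro mult_left_mono) auto
      also have "\<dots> = \<epsilon> * (N / (N + 1))" unfolding N_def \<delta>_def using N0 by (simp add: field_simps)
      also have "\<dots> < \<epsilon> * 1" using eps N0 by (intro mult_strict_left_mono) auto
      finally show ?thesis by simp
    qed
    thus "\<exists>\<delta>>0. \<forall>e. is_traj (2*n) M e
          \<longrightarrow> (\<forall>i < 2*n. \<bar>e 0 $ i\<bar> < \<delta>) \<longrightarrow> (\<forall>k. \<forall>i < 2*n. \<bar>e k $ i\<bar> < \<epsilon>)"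
      using d0 by blast
  qed
  have P3: "\<forall>e. is_traj (2*n) M e \<longrightarrow> (\<exists>M. \<forall>k. \<forall>i < 2*n. \<bar>e k $ i\<bar> \<le> M)"
    using ebound by blast
  have P4: "\<forall>e. is_traj (2*n) M e \<longrightarrow> (\<forall>p \<in> Dset n S1. exp_conv (\<lambda>k. e k $ (p - 1)))"
  proof (intro allI impI ballI)
    fix e p assume tr: "is_traj (2*n) M e" and p: "p \<in> Dset n S1"
    from C_select[OF S1(1) p] obtain l where l: "l < s"
      "\<And>v. v \<in> carrier_vec (2*n) \<Longrightarrow> (C *\<^sub>v v) $ l = v $ (p - 1)"
      unfolding s_def C_def by blast
    have "(\<lambda>k. e k $ (p - 1)) = (\<lambda>k. (C *\<^sub>v e k) $ l)" using l(2) ecar[OF tr] by auto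
    thus "exp_conv (\<lambda>k. e k $ (p - 1))" using expb[OF trajC[OF tr] l(1)] by simp
  qed
  have eqs: "1\<^sub>m s - Bbar n par r x D1 S1 * (F * Cbar n D1 S1) = Mb"
    "1\<^sub>m (2*n) - Bmat n par r x D1 * F * Cmat n S1 = M" "card (Dset n S1) = s"
    unfolding Hb_eq Mb_def M_def B_def C_def s_def by simp_all
  show ?thesis unfolding eqs(1) eqs(2) eqs(3) using P1 P2 P3 P4 by blast
qed

end
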